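(* Let $I$ be a non-empty finite set and, in the setting described in the context, let $n,s\in\mathbb{N}$, $k\in I$ and $r\in R$. Then the set $$E^{(r)}_{n,k,s}(I)=\{f\in A(\Omega):\operatorname{Re}(f\circ\phi_r)\restriction_{\mathbb{T}^I}\in D_{n,k,s}(I)\}$$ is an open subset of $A(\Omega)$.
   Context: For each $i\in I$, $\Omega_i\subset\mathbb{C}$ is a bounded domain whose boundary consists of $k_i$ disjoint Jordan curves; $V_{i,j}$, $j\in\{0,\dots,k_i-1\}$, are the connected components of $\hat{\mathbb{C}}\setminus\overline{\Omega_i}$, $\Omega_{i,j}=\hat{\mathbb{C}}\setminus\overline{V_{i,j}}$, and $\phi_{i,j}:\overline{D}\to\overline{\Omega_{i,j}}$ are fixed Riemann mappings (homeomorphisms of the closed unit disc onto the closure in $\hat{\mathbb{C}}$, conformal from $D$ onto $\Omega_{i,j}$). $\Omega=\prod_{i\in I}\Omega_i$, $\overline{\Omega}=\prod_{i\in I}\overline{\Omega_i}$ with the product topology. $A(\Omega)$ is the space of functions $f:\overline{\Omega}\to\mathbb{C}$ that are continuous on $\overline{\Omega}$ and separately holomorphic on $\Omega$ (holomorphic in each variable $z_{i_0}\in\Omega_{i_0}$ when the others are fixed), with the supremum norm. $R=\prod_{i\in I}\{0,\dots,k_i-1\}$, and for $r=(r_i)\in R$, $\phi_r:\overline{D}^I\to\prod_{i\in I}\overline{\Omega_{i,r_i}}$, $(z_i)\mapsto(\phi_{i,r_i}(z_i))$. Functions on $\mathbb{T}^I$ are identified with functions on $\mathbb{R}^I$ that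 are $2\pi$-periodic in each coordinate via $\theta\mapsto(e^{i\theta_j})_{j\in I}$. For $n,s\in\mathbb{N}$, $k\in I$, $D_{n,k,s}(I)$ is the set of real continuous $u$ on $\mathbb{T}^I$ such that for every $\theta\in\mathbb{R}^I$ and every $v\in\mathbb{R}^I$ with $\frac1s\le|v_k|\le s$ and $|v_j|\le s$ for all $j\in I$, there exists $y$ in the segment $\{\theta+tv:-\frac1n<t<\frac1n\}$ with $|u(\theta)-u(y)|>n\|y-\theta\|_\infty$. *)

theory Defs
  imports "HOL-Analysis.Analysis"
begin

definition jordan_curve :: "(real \<Rightarrow> complex) \<Rightarrow> bool" where
  "jordan_curve g \<longleftrightarrow> simple_path g \<and> pathfinish g = pathstart g"

definition boundary_jordan :: "complex set \<Rightarrow> nat \<Rightarrow> bool" where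
  "boundary_jordan U m \<longleftrightarrow>
     (\<exists>\<gamma> :: nat \<Rightarrow> real \<Rightarrow> complex.
        (\<forall>j<m. jordan_curve (\<gamma> j)) \<and>
        (\<forall>j<m. \<forall>j'<m. j \<noteq> j' \<longrightarrow> path_image (\<gamma> j) \<inter> path_image (\<gamma> j') = {}) \<and>
        frontier U = (\<Union>j<m. path_image (\<gamma> j)))"

definition jordan_domain :: "complex set \<Rightarrow> nat \<Rightarrow> bool" where
  "jordan_domain U m \<longleftrightarrow> open U \<and> connected U \<and> U \<noteq> {} \<and> bounded U \<and> boundary_jordan U m"

text \<open>Riemann map phi from the closed unit disc onto the closure (in the Riemann sphere) of
  Omega_V = Riemann sphere minus closure(V_hat), where V is the finite part of the component
  V_hat of the complement of closure(Omega_i) in the Riemann sphere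
  (V_hat = V if V is bounded, V_hat = V plus infinity otherwise).
  If V is bounded, infinity lies in Omega_V, and phi takes the value infinity at exactly one
  point a of the open disc; this is encoded by phi tending to infinity at a, phi being
  holomorphic and injective off a.  The value of phi at a itself is irrelevant.\<close>
definition riemann_map_ext :: "complex set \<Rightarrow> (complex \<Rightarrow> complex) \<Rightarrow> bool" where
  "riemann_map_ext V \<phi> \<longleftrightarrow>
     (if bounded V then
        (\<exists>a\<in>ball 0 1.
           \<phi> holomorphic_on (ball 0 1 - {a}) \<and>
           continuous_on (cball 0 1 - {a}) \<phi> \<and>
           inj_on \<phi> (cball 0 1 - {a}) \<and>
           \<phi> ` (ball 0 1 - {a}) = - closure V \<and>
           \<phi> ` (cball 0 1 - {a}) = closure (- closure V) \<and>
           filterlim \<phi> at_infinity (at a))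
      else
        \<phi> holomorphic_on ball 0 1 \<and>
        continuous_on (cball 0 1) \<phi> \<and>
        inj_on \<phi> (cball 0 1) \<and>
        \<phi> ` ball 0 1 = - closure V \<and>
        \<phi> ` cball 0 1 = closure (- closure V))"

definition setting ::
  "'i set \<Rightarrow> ('i \<Rightarrow> complex set) \<Rightarrow> ('i \<Rightarrow> nat) \<Rightarrow> ('i \<Rightarrow> nat \<Rightarrow> complex set)
   \<Rightarrow> ('i \<Rightarrow> nat \<Rightarrow> complex \<Rightarrow> complex) \<Rightarrow> bool" where
  "setting I \<Omega> K V \<phi> \<longleftrightarrow>
     (\<forall>i\<in>I. jordan_domain (\<Omega> i) (K i) \<and>
             bij_betw (V i) {..<K i} (components (- closure (\<Omega> i))) \<and>
             (\<forall>j<K i. riemann_map_ext (V i j) (\<phi> i j)))"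

definition cl_prod :: "'i set \<Rightarrow> ('i \<Rightarrow> complex set) \<Rightarrow> ('i \<Rightarrow> complex) set" where
  "cl_prod I \<Omega> = (\<Pi>\<^sub>E i\<in>I. closure (\<Omega> i))"

definition A_space :: "'i set \<Rightarrow> ('i \<Rightarrow> complex set) \<Rightarrow> (('i \<Rightarrow> complex) \<Rightarrow> complex) set" where
  "A_space I \<Omega> = {f. continuous_on (cl_prod I \<Omega>) f \<and>
      (\<forall>z\<in>(\<Pi>\<^sub>E i\<in>I. \<Omega> i). \<forall>i0\<in>I. (\<lambda>\<zeta>. f (z(i0 := \<zeta>))) holomorphic_on \<Omega> i0)}"

definition sup_dist :: "('i \<Rightarrow> complex) set \<Rightarrow> (('i \<Rightarrow> complex) \<Rightarrow> complex) \<Rightarrow> (('i \<Rightarrow> complex) \<Rightarrow> complex) \<Rightarrow> real" where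
  "sup_dist X f g = (SUP z\<in>X. cmod (f z - g z))"

definition torus :: "'i set \<Rightarrow> ('i \<Rightarrow> complex) set" where
  "torus I = (\<Pi>\<^sub>E i\<in>I. sphere 0 1)"

definition expI :: "'i set \<Rightarrow> ('i \<Rightarrow> real) \<Rightarrow> ('i \<Rightarrow> complex)" where
  "expI I \<theta> = (\<lambda>j\<in>I. exp (\<i> * complex_of_real (\<theta> j)))"

text \<open>D_{n,k,s}(I): real continuous functions on T^I (viewed as periodic functions on R^I).\<close>
definition D_set :: "nat \<Rightarrow> 'i \<Rightarrow> nat \<Rightarrow> 'i set \<Rightarrow> (('i \<Rightarrow> complex) \<Rightarrow> real) set" where
  "D_set n k s I = {u. continuous_on (torus I) u \<and>
     (\<forall>\<theta> v :: 'i \<Rightarrow> real.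
        (1 / real s \<le> \<bar>v k\<bar> \<and> \<bar>v k\<bar> \<le> real s \<and> (\<forall>j\<in>I. \<bar>v j\<bar> \<le> real s)) \<longrightarrow>
        (\<exists>t::real. - 1 / real n < t \<and> t < 1 / real n \<and>
           (let y = (\<lambda>j. \<theta> j + t * v j) in
              \<bar>u (expI I \<theta>) - u (expI I y)\<bar> > real n * Max ((\<lambda>j. \<bar>y j - \<theta> j\<bar>) ` I))))}"

definition phi_r :: "'i set \<Rightarrow> ('i \<Rightarrow> nat \<Rightarrow> complex \<Rightarrow> complex) \<Rightarrow> ('i \<Rightarrow> nat) \<Rightarrow> ('i \<Rightarrow> complex) \<Rightarrow> ('i \<Rightarrow> complex)" where
  "phi_r I \<phi> r z = (\<lambda>i\<in>I. \<phi> i (r i) (z i))"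

definition E_set ::
  "'i set \<Rightarrow> ('i \<Rightarrow> complex set) \<Rightarrow> ('i \<Rightarrow> nat \<Rightarrow> complex \<Rightarrow> complex) \<Rightarrow> ('i \<Rightarrow> nat)
   \<Rightarrow> nat \<Rightarrow> 'i \<Rightarrow> nat \<Rightarrow> (('i \<Rightarrow> complex) \<Rightarrow> complex) set" where
  "E_set I \<Omega> \<phi> r n k s =
     {f \<in> A_space I \<Omega>. (\<lambda>w. Re (f (phi_r I \<phi> r w))) \<in> D_set n k s I}"

end

theory Submission
  imports Defs
begin

lemma compact_PiE_fun:
  assumes "\<And>i. i \<in> I \<Longrightarrow> compact (S i :: 'b::topological_space set)"
  shows "compact (PiE I S)"
proof -
  define S' where "S' i = (if i \<in> I then S i else {undefined})" for i
  have eq: "PiE I S = PiE UNIV S'"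
    apply (auto simp: S'_def PiE_iff extensional_def)
    by (metis singletonD)+
  have "compactin (product_topology (\<lambda>i. euclidean) UNIV) (PiE UNIV S')"
    by (subst compactin_PiE) (auto simp: S'_def assms)
  then show ?thesis
    by (metis eq euclidean_product_topology compactin_euclidean_iff)
qed

lemma continuous_on_Max_fin:
  fixes f :: "'i \<Rightarrow> 'a::topological_space \<Rightarrow> real"
  assumes "finite I" "I \<noteq> {}" "\<And>j. j \<in> I \<Longrightarrow> continuous_on S (f j)"
  shows "continuous_on S (\<lambda>x. Max ((\<lambda>j. f j x) ` I))"
  using assms
proof (induction I rule: finite_ne_induct)
  case (singleton x)
  then show ?case by simp
next
  case (insert a F)
  have "(\<lambda>x. Max ((\<lambda>j. f j x) ` insert a F)) = (\<lambda>x. max (f a x) (Max ((\<lambda>j. f j x) ` F)))"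
    using insert by (auto simp: Max_insert)
  then show ?case using insert by (auto intro!: continuous_intros)
qed

lemma phi_sphere:
  assumes "riemann_map_ext W \<phi>"
  shows "continuous_on (sphere 0 1) \<phi> \<and> \<phi> ` sphere 0 1 \<subseteq> frontier W"
proof -
  have fr: "closure W \<inter> closure (- closure W) \<subseteq> frontier W"
    unfolding frontier_closures using closure_mono[of "- closure W" "- W"] closure_subset[of W]
    by auto
  show ?thesis
  proof (cases "bounded W")
    case True
    then obtain a where a: "a \<in> ball 0 1" "continuous_on (cball 0 1 - {a}) \<phi>"
       "inj_on \<phi> (cball 0 1 - {a})" "\<phi> ` (ball 0 1 - {a}) = - closure W"
       "\<phi> ` (cball 0 1 - {a}) = closure (- closure W)"
      using assms unfolding riemann_map_ext_def by auto
    have sub: "sphere 0 1 \<subseteq> cball 0 1 - {a}" using a(1) by auto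
    have "\<phi> x \<in> frontier W" if x: "x \<in> sphere 0 1" for x
    proof -
      have "\<phi> x \<in> closure (- closure W)" using a(5) sub x by blast
      moreover have "\<phi> x \<notin> - closure W"
      proof
        assume "\<phi> x \<in> - closure W"
        then obtain y where y: "y \<in> ball 0 1 - {a}" "\<phi> x = \<phi> y" using a(4) by (metis imageE)
        have "x = y" by (rule inj_onD[OF a(3) y(2)]) (use x sub y in auto)
        then show False using x y by auto
      qed
      ultimately show ?thesis using fr by auto
    qed
    then show ?thesis using continuous_on_subset[OF a(2) sub] by auto
  next
    case False
    then have a: "continuous_on (cball 0 1) \<phi>"
       "inj_on \<phi> (cball 0 1)" "\<phi> ` (ball 0 1) = - closure W"
       "\<phi> ` (cball 0 1) = closure (- closure W)"
      using assms unfolding riemann_map_ext_def by auto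
    have sub: "sphere 0 1 \<subseteq> cball (0::complex) 1" by auto
    have "\<phi> x \<in> frontier W" if x: "x \<in> sphere 0 1" for x
    proof -
      have "\<phi> x \<in> closure (- closure W)" using a(4) sub x by blast
      moreover have "\<phi> x \<notin> - closure W"
      proof
        assume "\<phi> x \<in> - closure W"
        then obtain y where y: "y \<in> ball 0 1" "\<phi> x = \<phi> y" using a(3) by (metis imageE)
        have "x = y" by (rule inj_onD[OF a(2) y(2)]) (use x sub y in auto)
        then show False using x y by auto
      qed
      ultimately show ?thesis using fr by auto
    qed
    then show ?thesis using continuous_on_subset[OF a(1) sub] by auto
  qed
qed

lemma phi_r_props:
  assumes "setting I \<Omega> K V \<phi>" "\<forall>i\<in>I. r i < K i"
  shows "continuous_on (torus I) (phi_r I \<phi> r) \<and> phi_r I \<phi> r ` torus I \<subseteq> cl_prod I \<Omega>"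
proof -
  have ph: "continuous_on (sphere 0 1) (\<phi> i (r i)) \<and> \<phi> i (r i) ` sphere 0 1 \<subseteq> closure (\<Omega> i)"
    if i: "i \<in> I" for i
  proof -
    have st: "bij_betw (V i) {..<K i} (components (- closure (\<Omega> i)))"
      "riemann_map_ext (V i (r i)) (\<phi> i (r i))"
      using assms i unfolding setting_def by auto
    have "V i (r i) \<in> components (- closure (\<Omega> i))"
      using st(1) assms(2) i by (auto simp: bij_betw_def)
    then have "frontier (V i (r i)) \<subseteq> frontier (closure (\<Omega> i))"
      using frontier_of_components_subset by fastforce
    also have "\<dots> \<subseteq> closure (\<Omega> i)" by (simp add: frontier_def)
    finally show ?thesis using phi_sphere[OF st(2)] by blast
  qed
  have "continuous_on (torus I) (\<lambda>z. phi_r I \<phi> r z i)" for i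
  proof (cases "i \<in> I")
    case True
    have c1: "continuous_on (torus I) (\<lambda>z. z i)"
      by (rule continuous_on_subset[OF continuous_on_product_coordinates]) simp
    have "continuous_on (torus I) (\<lambda>z. \<phi> i (r i) (z i))"
      by (rule continuous_on_compose2[OF ph[OF True, THEN conjunct1] c1])
         (use True in \<open>auto simp: torus_def\<close>)
    then show ?thesis using True by (simp add: phi_r_def)
  next
    case False
    then show ?thesis by (simp add: phi_r_def)
  qed
  then have "continuous_on (torus I) (phi_r I \<phi> r)"
    by (intro continuous_on_coordinatewise_then_product)
  moreover have "phi_r I \<phi> r ` torus I \<subseteq> cl_prod I \<Omega>"
    using ph by (fastforce simp: phi_r_def torus_def cl_prod_def)
  ultimately show ?thesis by blast
qed

theorem lemma5p2:
  fixes I :: "'i set" and \<Omega> :: "'i \<Rightarrow> complex set" and K :: "'i \<Rightarrow> nat"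
    and V :: "'i \<Rightarrow> nat \<Rightarrow> complex set" and \<phi> :: "'i \<Rightarrow> nat \<Rightarrow> complex \<Rightarrow> complex"
    and n s :: nat and k :: 'i and r :: "'i \<Rightarrow> nat"
  assumes "finite I" and "I \<noteq> {}"
    and "setting I \<Omega> K V \<phi>"
    and "n \<ge> 1" and "s \<ge> 1" and "k \<in> I"
    and "\<forall>i\<in>I. r i < K i"
  shows "\<forall>f\<in>E_set I \<Omega> \<phi> r n k s. \<exists>\<epsilon>>0. \<forall>g\<in>A_space I \<Omega>.
           sup_dist (cl_prod I \<Omega>) f g < \<epsilon> \<longrightarrow> g \<in> E_set I \<Omega> \<phi> r n k s"
proof
  fix f assume fE: "f \<in> E_set I \<Omega> \<phi> r n k s"
  define P where "P = phi_r I \<phi> r"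
  define u where "u = (\<lambda>w. Re (f (P w)))"
  have fA: "f \<in> A_space I \<Omega>" and uD: "u \<in> D_set n k s I"
    using fE by (auto simp: E_set_def u_def P_def)
  have ucont: "continuous_on (torus I) u" using uD by (simp add: D_set_def)
  have Pc: "continuous_on (torus I) P" and Pim: "P ` torus I \<subseteq> cl_prod I \<Omega>"
    using phi_r_props[OF assms(3,7)] by (auto simp: P_def)
  define S where "S i = (if i = k then {x::real. 1/real s \<le> \<bar>x\<bar> \<and> \<bar>x\<bar> \<le> real s} else cball 0 (real s))" for i
  define KK where "KK = torus I \<times> PiE I S"
  have cS: "compact (S i)" for i
  proof -
    have "closed {x::real. 1/real s \<le> \<bar>x\<bar> \<and> \<bar>x\<bar> \<le> real s}"
      by (intro closed_Collect_conj closed_Collect_le continuous_intros)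
    moreover have "bounded {x::real. 1/real s \<le> \<bar>x\<bar> \<and> \<bar>x\<bar> \<le> real s}"
      by (rule bounded_subset[of "cball 0 (real s)"]) auto
    ultimately show ?thesis by (auto simp: S_def compact_eq_bounded_closed)
  qed
  have cT: "compact (torus I)" unfolding torus_def
    by (rule compact_PiE_fun) simp
  have cK: "compact KK" unfolding KK_def
    by (intro compact_Times cT compact_PiE_fun cS)
  define W where "W t z v = (\<lambda>j\<in>I. z j * exp (\<i> * complex_of_real (t * v j)))"
    for t :: real and z :: "'i \<Rightarrow> complex" and v :: "'i \<Rightarrow> real"
  have Wtor: "W t z v \<in> torus I" if "z \<in> torus I" for t z v
    using that by (auto simp: W_def torus_def norm_mult)
  define G where "G t p = \<bar>u (fst p) - u (W t (fst p) (snd p))\<bar>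
      - real n * Max ((\<lambda>j. \<bar>t * snd p j\<bar>) ` I)" for t :: real and p :: "('i \<Rightarrow> complex) \<times> ('i \<Rightarrow> real)"
  have Gc: "continuous_on KK (G t)" for t
  proof -
    have Wc: "continuous_on UNIV (\<lambda>p::('i \<Rightarrow> complex) \<times> ('i \<Rightarrow> real). W t (fst p) (snd p))"
    proof (intro continuous_on_coordinatewise_then_product)
      fix j
      have e: "(\<lambda>p::('i \<Rightarrow> complex) \<times> ('i \<Rightarrow> real). W t (fst p) (snd p) j) =
        (\<lambda>p. if j \<in> I then fst p j * exp (\<i> * complex_of_real (t * snd p j)) else undefined)"
        by (auto simp: W_def)
      have c1: "continuous_on UNIV (\<lambda>p::('i \<Rightarrow> complex) \<times> ('i \<Rightarrow> real). fst p j)"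
        by (rule continuous_on_compose2[OF continuous_on_product_coordinates continuous_on_fst]) auto
      have c2: "continuous_on UNIV (\<lambda>p::('i \<Rightarrow> complex) \<times> ('i \<Rightarrow> real). snd p j)"
        by (rule continuous_on_compose2[OF continuous_on_product_coordinates continuous_on_snd]) auto
      show "continuous_on UNIV (\<lambda>p::('i \<Rightarrow> complex) \<times> ('i \<Rightarrow> real). W t (fst p) (snd p) j)"
        unfolding e by (cases "j \<in> I") (auto intro!: continuous_intros c1 c2)
    qed
    have KT: "fst ` KK \<subseteq> torus I" by (auto simp: KK_def)
    have KW: "(\<lambda>p. W t (fst p) (snd p)) ` KK \<subseteq> torus I" using Wtor by (auto simp: KK_def)
    have u1: "continuous_on KK (\<lambda>p. u (fst p))"
      by (rule continuous_on_compose2[OF ucont continuous_on_fst[OF continuous_on_id] KT])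
    have u2: "continuous_on KK (\<lambda>p. u (W t (fst p) (snd p)))"
      by (rule continuous_on_compose2[OF ucont continuous_on_subset[OF Wc] KW]) auto
    have m: "continuous_on KK (\<lambda>p. Max ((\<lambda>j. \<bar>t * snd p j\<bar>) ` I))"
    proof (rule continuous_on_Max_fin[OF assms(1,2)])
      fix j
      have c2: "continuous_on UNIV (\<lambda>p::('i \<Rightarrow> complex) \<times> ('i \<Rightarrow> real). snd p j)"
        by (rule continuous_on_compose2[OF continuous_on_product_coordinates continuous_on_snd]) auto
      have cj: "continuous_on KK (\<lambda>p. snd p j)" using continuous_on_subset[OF c2] by blast
      show "continuous_on KK (\<lambda>p. \<bar>t * snd p j\<bar>)"
        by (rule continuous_on_rabs, rule continuous_on_mult'[OF continuous_on_const cj])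
    qed
    show ?thesis unfolding G_def by (intro continuous_intros u1 u2 m)
  qed
  have good: "\<exists>t. -1/real n < t \<and> t < 1/real n \<and> G t p > 0" if p: "p \<in> KK" for p
  proof -
    obtain z v where zv: "p = (z, v)" "z \<in> torus I" "v \<in> PiE I S" using p by (auto simp: KK_def)
    define \<theta> where "\<theta> j = Arg (z j)" for j
    have z1: "norm (z j) = 1" if "j \<in> I" for j using zv(2) that by (auto simp: torus_def)
    have ez: "expI I \<theta> = z"
    proof
      fix j show "expI I \<theta> j = z j"
      proof (cases "j \<in> I")
        case True
        then have "z j \<noteq> 0" using z1 by fastforce
        then have "z j = of_real (norm (z j)) * exp (\<i> * of_real (Arg (z j)))" by (rule Arg_eq)
        then show ?thesis using True z1[OF True] by (simp add: expI_def \<theta>_def)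
      next
        case False
        then show ?thesis using zv(2) by (auto simp: expI_def torus_def PiE_iff extensional_def)
      qed
    qed
    have vk: "1 / real s \<le> \<bar>v k\<bar> \<and> \<bar>v k\<bar> \<le> real s" using zv(3) assms(6) by (auto simp: S_def PiE_iff)
    have vj: "\<forall>j\<in>I. \<bar>v j\<bar> \<le> real s" using zv(3) by (auto simp: S_def PiE_iff split: if_splits)
    obtain t where t: "- 1 / real n < t" "t < 1 / real n"
      "\<bar>u (expI I \<theta>) - u (expI I (\<lambda>j. \<theta> j + t * v j))\<bar> >
         real n * Max ((\<lambda>j. \<bar>(\<theta> j + t * v j) - \<theta> j\<bar>) ` I)"
      using uD vk vj unfolding D_set_def Let_def by blast
    have ey: "expI I (\<lambda>j. \<theta> j + t * v j) = W t z v"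
    proof
      fix j show "expI I (\<lambda>j. \<theta> j + t * v j) j = W t z v j"
        using ez[THEN fun_cong, of j]
        by (cases "j \<in> I") (auto simp: expI_def W_def distrib_left exp_add)
    qed
    have "G t p > 0" using t(3) unfolding G_def zv(1) ey ez by simp
    then show ?thesis using t(1,2) by auto
  qed
  define C where "C = {t::real. -1/real n < t \<and> t < 1/real n} \<times> (UNIV :: nat set)"
  define U where "U c = (SOME Q. open Q \<and> KK \<inter> G (fst c) -` {1 / real (Suc (snd c))<..} = KK \<inter> Q)" for c
  have U: "open (U c) \<and> KK \<inter> G (fst c) -` {1 / real (Suc (snd c))<..} = KK \<inter> U c" for c
  proof -
    have "openin (top_of_set KK) (KK \<inter> G (fst c) -` {1 / real (Suc (snd c))<..})"
      by (rule continuous_openin_preimage_gen[OF Gc]) simp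
    then have "\<exists>Q. open Q \<and> KK \<inter> G (fst c) -` {1 / real (Suc (snd c))<..} = KK \<inter> Q"
      by (auto simp: openin_open Int_commute)
    then show ?thesis unfolding U_def by (rule someI_ex)
  qed
  have cover: "KK \<subseteq> (\<Union>c\<in>C. U c)"
  proof
    fix p assume p: "p \<in> KK"
    obtain t where t: "-1/real n < t" "t < 1/real n" "G t p > 0" using good[OF p] by blast
    obtain m where m: "inverse (real (Suc m)) < G t p" using reals_Archimedean[OF t(3)] by blast
    have "p \<in> KK \<inter> G (fst (t, m)) -` {1 / real (Suc (snd (t, m)))<..}"
      using p m by (simp add: inverse_eq_divide)
    then have "p \<in> U (t, m)" using U[of "(t, m)"] by blast
    moreover have "(t, m) \<in> C" using t by (simp add: C_def)
    ultimately show "p \<in> (\<Union>c\<in>C. U c)" by blast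
  qed
  obtain C' where C': "C' \<subseteq> C" "finite C'" "KK \<subseteq> (\<Union>c\<in>C'. U c)"
    using compactE_image[OF cK, of C U] U cover by blast
  define \<delta> where "\<delta> = 1 / real (Suc (Max (snd ` C')))"
  have \<delta>pos: "\<delta> > 0" by (simp add: \<delta>_def)
  have Kgood: "\<exists>t. -1/real n < t \<and> t < 1/real n \<and> G t p > \<delta>" if p: "p \<in> KK" for p
  proof -
    obtain c where c: "c \<in> C'" "p \<in> U c" using C'(3) p by blast
    have "p \<in> KK \<inter> G (fst c) -` {1 / real (Suc (snd c))<..}" using U[of c] c p by blast
    then have g1: "G (fst c) p > 1 / real (Suc (snd c))" by simp
    have "snd c \<le> Max (snd ` C')" using C'(2) c(1) by (intro Max_ge) auto
    then have "\<delta> \<le> 1 / real (Suc (snd c))" unfolding \<delta>_def by (simp add: frac_le)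
    moreover have "-1/real n < fst c" "fst c < 1/real n" using c(1) C'(1) by (auto simp: C_def)
    ultimately show ?thesis using g1 by force
  qed
  have cl: "compact (cl_prod I \<Omega>)" unfolding cl_prod_def
  proof (rule compact_PiE_fun)
    fix i assume "i \<in> I"
    then have "bounded (\<Omega> i)" using assms(3) by (auto simp: setting_def jordan_domain_def)
    then show "compact (closure (\<Omega> i))" by (rule compact_closure[THEN iffD2])
  qed
  show "\<exists>\<epsilon>>0. \<forall>g\<in>A_space I \<Omega>. sup_dist (cl_prod I \<Omega>) f g < \<epsilon> \<longrightarrow> g \<in> E_set I \<Omega> \<phi> r n k s"
  proof (intro exI[of _ "\<delta>/2"] conjI ballI impI)
    show "\<delta>/2 > 0" using \<delta>pos by simp
    fix g assume gA: "g \<in> A_space I \<Omega>" and sd: "sup_dist (cl_prod I \<Omega>) f g < \<delta>/2"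
    define ug where "ug = (\<lambda>w. Re (g (P w)))"
    have fc: "continuous_on (cl_prod I \<Omega>) f" and gc: "continuous_on (cl_prod I \<Omega>) g"
      using fA gA by (auto simp: A_space_def)
    have bdd: "bdd_above ((\<lambda>z. cmod (f z - g z)) ` cl_prod I \<Omega>)"
    proof -
      have "compact ((\<lambda>z. cmod (f z - g z)) ` cl_prod I \<Omega>)"
        by (intro compact_continuous_image cl continuous_intros fc gc)
      then show ?thesis by (intro bounded_imp_bdd_above compact_imp_bounded)
    qed
    have close: "\<bar>u w - ug w\<bar> < \<delta>/2" if w: "w \<in> torus I" for w
    proof -
      have Pw: "P w \<in> cl_prod I \<Omega>" using Pim w by blast
      have "\<bar>u w - ug w\<bar> \<le> cmod (f (P w) - g (P w))"
        unfolding u_def ug_def using abs_Re_le_cmod[of "f (P w) - g (P w)"] by simp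
      also have "\<dots> \<le> sup_dist (cl_prod I \<Omega>) f g"
        unfolding sup_dist_def by (rule cSUP_upper[OF Pw bdd])
      finally show ?thesis using sd by simp
    qed
    have ugc: "continuous_on (torus I) ug"
      unfolding ug_def
      by (intro continuous_intros continuous_on_compose2[OF gc Pc Pim])
    have "ug \<in> D_set n k s I"
      unfolding D_set_def Let_def
    proof (intro CollectI conjI ugc allI impI)
      fix \<theta> v :: "'i \<Rightarrow> real"
      assume h: "1 / real s \<le> \<bar>v k\<bar> \<and> \<bar>v k\<bar> \<le> real s \<and> (\<forall>j\<in>I. \<bar>v j\<bar> \<le> real s)"
      define z where "z = expI I \<theta>"
      define v' where "v' = restrict v I"
      have zt: "z \<in> torus I" by (auto simp: z_def expI_def torus_def)
      have v'S: "v' \<in> PiE I S" using h by (auto simp: v'_def S_def)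
      obtain t where t: "-1/real n < t" "t < 1/real n" "G t (z, v') > \<delta>"
        using Kgood[of "(z, v')"] zt v'S by (auto simp: KK_def)
      have ey: "expI I (\<lambda>j. \<theta> j + t * v j) = W t z v'"
        by (auto simp: expI_def W_def z_def v'_def distrib_left exp_add)
      have mx: "Max ((\<lambda>j. \<bar>(\<theta> j + t * v j) - \<theta> j\<bar>) ` I) = Max ((\<lambda>j. \<bar>t * v' j\<bar>) ` I)"
        by (intro arg_cong[where f=Max] image_cong) (auto simp: v'_def)
      have Wt: "W t z v' \<in> torus I" using Wtor zt by blast
      have A: "\<bar>u z - u (W t z v')\<bar> > real n * Max ((\<lambda>j. \<bar>t * v' j\<bar>) ` I) + \<delta>"
        using t(3) by (simp add: G_def)
      have B1: "\<bar>u z - ug z\<bar> < \<delta>/2" using close zt by blast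
      have B2: "\<bar>u (W t z v') - ug (W t z v')\<bar> < \<delta>/2" using close Wt by blast
      have "\<bar>ug z - ug (W t z v')\<bar> > real n * Max ((\<lambda>j. \<bar>t * v' j\<bar>) ` I)"
        using A B1 B2 by linarith
      then have "real n * Max ((\<lambda>j. \<bar>\<theta> j + t * v j - \<theta> j\<bar>) ` I)
           < \<bar>ug (expI I \<theta>) - ug (expI I (\<lambda>j. \<theta> j + t * v j))\<bar>"
        by (simp only: ey mx z_def[symmetric])
      then show "\<exists>t. - 1 / real n < t \<and> t < 1 / real n \<and>
           real n * Max ((\<lambda>j. \<bar>\<theta> j + t * v j - \<theta> j\<bar>) ` I)
           < \<bar>ug (expI I \<theta>) - ug (expI I (\<lambda>j. \<theta> j + t * v j))\<bar>"
        using t(1,2) by blast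
    qed
    then show "g \<in> E_set I \<Omega> \<phi> r n k s"
      using gA by (simp add: E_set_def ug_def P_def)
  qed
qed

end
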